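(* For every $d\ge1$, $\mathsf{sumPI}(\mathcal{A}^d)=2.5^d$.
   Context: $\mathcal{A}:\{0,1\}^4\to\{0,1\}$ is the function with $\mathcal{A}(x)=1$ iff $x\in\{0000,0001,0011,0111,1111,1110,1100,1000\}$, i.e. iff $x_1\le x_2\le x_3\le x_4$ or $x_1\ge x_2\ge x_3\ge x_4$. For $f:\{0,1\}^n\to\{0,1\}$, its $d$th iteration $f^d:\{0,1\}^{n^d}\to\{0,1\}$ is defined by $f^1=f$ and $f^{d+1}(x)=f\big(f^d(x_1,\dots,x_{n^d}),\ f^d(x_{n^d+1},\dots,x_{2n^d}),\ \dots,\ f^d(x_{(n-1)n^d+1},\dots,x_{n^{d+1}})\big)$. For $g:\{0,1\}^N\to\{0,1\}$, with $p=\{p_x\}$ ranging over families of probability distributions on $[N]$, $$\mathsf{sumPI}(g)=\min_{p}\ \max_{x,y:\ g(x)\neq g(y)} \frac{1}{\sum_{i:\,x_i\neq y_i}\sqrt{p_x(i)p_y(i)}}.$$ *)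

theory Defs
  imports "HOL-Analysis.Analysis"
begin

text \<open>Bit strings of length N are boolean lists of length N (False = 0, True = 1);
  coordinates are indexed 0..N-1.\<close>

definition bitstrings :: "nat \<Rightarrow> bool list set" where
  "bitstrings N = {x. length x = N}"

text \<open>The function A on 4 bits: A(x) = 1 iff x1 <= x2 <= x3 <= x4 or x1 >= x2 >= x3 >= x4.\<close>
definition funA :: "bool list \<Rightarrow> bool" where
  "funA x = (x \<in> {[False,False,False,False], [False,False,False,True], [False,False,True,True],
                  [False,True,True,True], [True,True,True,True], [True,True,True,False],
                  [True,True,False,False], [True,False,False,False]})"

text \<open>Iterated composition: iter n d f maps bit strings of length n^d to bool.
  iter n 0 f is the identity on one bit, so iter n 1 f = f on inputs of length n.\<close>
fun iter :: "nat \<Rightarrow> nat \<Rightarrow> (bool list \<Rightarrow> bool) \<Rightarrow> bool list \<Rightarrow> bool" where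
  "iter n 0 f x = hd x"
| "iter n (Suc d) f x =
     f (map (\<lambda>j. iter n d f (take (n ^ d) (drop (j * n ^ d) x))) [0..<n])"

definition prob_families :: "nat \<Rightarrow> (bool list \<Rightarrow> nat \<Rightarrow> real) set" where
  "prob_families N = {p. \<forall>x \<in> bitstrings N. (\<forall>i<N. p x i \<ge> 0) \<and> (\<Sum>i<N. p x i) = 1}"

definition pair_weight :: "nat \<Rightarrow> (bool list \<Rightarrow> nat \<Rightarrow> real) \<Rightarrow> bool list \<Rightarrow> bool list \<Rightarrow> real" where
  "pair_weight N p x y = (\<Sum>i \<in> {i. i < N \<and> x ! i \<noteq> y ! i}. sqrt (p x i * p y i))"

definition inv_weight :: "real \<Rightarrow> ereal" where
  "inv_weight w = (if w = 0 then \<infinity> else ereal (1 / w))"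

definition sumPI_obj :: "nat \<Rightarrow> (bool list \<Rightarrow> bool) \<Rightarrow> (bool list \<Rightarrow> nat \<Rightarrow> real) \<Rightarrow> ereal" where
  "sumPI_obj N g p = (SUP xy \<in> {(x, y). x \<in> bitstrings N \<and> y \<in> bitstrings N \<and> g x \<noteq> g y}.
                        inv_weight (pair_weight N p (fst xy) (snd xy)))"

text \<open>sumPI of g : {0,1}^N -> {0,1}; the min over p is rendered as an infimum.\<close>
definition sumPI :: "nat \<Rightarrow> (bool list \<Rightarrow> bool) \<Rightarrow> ereal" where
  "sumPI N g = (INF p \<in> prob_families N. sumPI_obj N g p)"

end

theory Submission
  imports Defs
begin

definition blk :: "nat \<Rightarrow> nat \<Rightarrow> bool list \<Rightarrow> bool list" where
  "blk N j x = take N (drop (j * N) x)"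

definition compf :: "nat \<Rightarrow> nat \<Rightarrow> (bool list \<Rightarrow> bool) \<Rightarrow> (bool list \<Rightarrow> bool) \<Rightarrow> bool list \<Rightarrow> bool" where
  "compf n N f g x = f (map (\<lambda>j. g (blk N j x)) [0..<n])"

lemma iter_Suc_comp: "iter 4 (Suc d) funA = compf 4 (4^d) funA (iter 4 d funA)"
  by (rule ext) (simp add: compf_def blk_def)

lemma bs_finite: "finite (bitstrings N)"
proof -
  have "bitstrings N = {xs. set xs \<subseteq> (UNIV::bool set) \<and> length xs = N}"
    by (auto simp: bitstrings_def)
  then show ?thesis using finite_lists_length_eq[of "UNIV::bool set" N] by simp
qed

lemma bs_ne: "replicate N False \<in> bitstrings N"
  by (simp add: bitstrings_def)

lemma pw_alt: "pair_weight N p x y = (\<Sum>i<N. if x!i \<noteq> y!i then sqrt (p x i * p y i) else 0)"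
proof -
  have "{i. i < N \<and> x!i \<noteq> y!i} = {i\<in>{..<N}. x!i \<noteq> y!i}" by auto
  then show ?thesis unfolding pair_weight_def
    using sum.inter_filter[OF finite_lessThan, of "\<lambda>i. sqrt (p x i * p y i)" N "\<lambda>i. x!i \<noteq> y!i"]
    by (simp only:)
qed

lemma pw_nonneg: "(\<forall>i<N. p x i \<ge> 0 \<and> p y i \<ge> 0) \<Longrightarrow> pair_weight N p x y \<ge> 0"
  unfolding pw_alt by (intro sum_nonneg) simp

lemma blk_len: assumes "length x = n*N" "j < n" shows "length (blk N j x) = N"
proof -
  have "Suc j * N \<le> n * N" using assms(2) by (intro mult_le_mono1) simp
  then show ?thesis using assms(1) by (simp add: blk_def)
qed

lemma blk_bs: "x \<in> bitstrings (n*N) \<Longrightarrow> j < n \<Longrightarrow> blk N j x \<in> bitstrings N"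
  using blk_len by (simp add: bitstrings_def)

lemma blk_nth: assumes "length x = n*N" "j < n" "i0 < N" shows "blk N j x ! i0 = x ! (j*N+i0)"
proof -
  have "Suc j * N \<le> n * N" using assms(2) by (intro mult_le_mono1) simp
  then show ?thesis using assms by (simp add: blk_def)
qed

lemma sum_shift: "(\<Sum>i\<in>{m..<m+K}. F i) = (\<Sum>i<K. F (m+i::nat))"
  using sum.atLeastLessThan_shift_0[of F m "m+K"] by (simp add: atLeast0LessThan o_def)

lemma sum_split: "(\<Sum>i<(n::nat)*N. F i) = (\<Sum>j<n. \<Sum>i<N. F (j*N+i)::real)"
proof (induction n)
  case 0 then show ?case by simp
next
  case (Suc n)
  have "{..<Suc n * N} = {..<n*N} \<union> {n*N..<n*N+N}" by auto
  then have "(\<Sum>i<Suc n*N. F i) = (\<Sum>i\<in>{..<n*N} \<union> {n*N..<n*N+N}. F i)"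
    by simp
  also have "\<dots> = (\<Sum>i<n*N. F i) + (\<Sum>i\<in>{n*N..<n*N+N}. F i)"
    by (rule sum.union_disjoint) auto
  also have "(\<Sum>i\<in>{n*N..<n*N+N}. F i) = (\<Sum>i<N. F (n*N+i))"
    by (rule sum_shift)
  finally show ?case using Suc by simp
qed

lemma sum_bs_append:
  "(\<Sum>y\<in>bitstrings (N+M). F y) = (\<Sum>a\<in>bitstrings N. \<Sum>b\<in>bitstrings M. (F (a@b)::real))"
proof -
  have img: "bitstrings (N+M) = (\<lambda>(a,b). a@b) ` (bitstrings N \<times> bitstrings M)"
  proof
    show "bitstrings (N+M) \<subseteq> (\<lambda>(a,b). a@b) ` (bitstrings N \<times> bitstrings M)"
    proof
      fix y assume "y \<in> bitstrings (N+M)"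
      then have "y = take N y @ drop N y" "take N y \<in> bitstrings N" "drop N y \<in> bitstrings M"
        by (auto simp: bitstrings_def)
      then show "y \<in> (\<lambda>(a,b). a@b) ` (bitstrings N \<times> bitstrings M)"
        by (intro image_eqI[where x="(take N y, drop N y)"]) auto
    qed
  qed (auto simp: bitstrings_def)
  have inj: "inj_on (\<lambda>(a,b). a@b) (bitstrings N \<times> bitstrings M)"
    by (auto simp: inj_on_def bitstrings_def append_eq_append_conv)
  show ?thesis
    unfolding img sum.reindex[OF inj] unfolding sum.cartesian_product o_def case_prod_unfold ..
qed

lemma sum_bs_Suc:
  "(\<Sum>w\<in>bitstrings (Suc n). F w) = (\<Sum>v\<in>UNIV. \<Sum>w\<in>bitstrings n. (F (v # w)::real))"
proof -
  have img: "bitstrings (Suc n) = (\<lambda>(a,b). a#b) ` (UNIV \<times> bitstrings n)"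
  proof
    show "bitstrings (Suc n) \<subseteq> (\<lambda>(a,b). a#b) ` (UNIV \<times> bitstrings n)"
    proof
      fix y assume "y \<in> bitstrings (Suc n)"
      then obtain a b where "y = a # b" "b \<in> bitstrings n"
        by (auto simp: bitstrings_def length_Suc_conv)
      then show "y \<in> (\<lambda>(a,b). a#b) ` (UNIV \<times> bitstrings n)" by force
    qed
  qed (auto simp: bitstrings_def)
  have inj: "inj_on (\<lambda>(a,b). a#b) (UNIV \<times> bitstrings n)"
    by (auto simp: inj_on_def)
  show ?thesis
    unfolding img sum.reindex[OF inj] unfolding sum.cartesian_product o_def case_prod_unfold ..
qed

lemma bs0: "bitstrings 0 = {[]}" by (auto simp: bitstrings_def)

lemma decomp:
  "(\<Sum>y\<in>bitstrings (n*N). H (map (\<lambda>k. g (blk N k y)) [0..<n]) * (\<Prod>k<n. K k (blk N k y)))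
   = (\<Sum>w\<in>bitstrings n. H w * (\<Prod>k<n. \<Sum>b\<in>{b\<in>bitstrings N. g b = w!k}. (K k b::real)))"
proof (induction n arbitrary: H K)
  case 0
  then show ?case by (simp add: bs0)
next
  case (Suc n)
  define S where "S k v = (\<Sum>b\<in>{b\<in>bitstrings N. g b = v}. K k b)" for k v
  define R where "R v = (\<Sum>w\<in>bitstrings n. H (v # w) * (\<Prod>k<n. S (Suc k) (w!k)))" for v
  have blk0: "blk N 0 (a@b) = a" if "a \<in> bitstrings N" for a b
    using that by (simp add: blk_def bitstrings_def)
  have blkS: "blk N (Suc k) (a@b) = blk N k b" if "a \<in> bitstrings N" for a b k
    using that by (simp add: blk_def bitstrings_def add.commute)
  have "(\<Sum>y\<in>bitstrings (Suc n*N). H (map (\<lambda>k. g (blk N k y)) [0..<Suc n]) * (\<Prod>k<Suc n. K k (blk N k y)))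
      = (\<Sum>a\<in>bitstrings N. \<Sum>b\<in>bitstrings (n*N). H (g a # map (\<lambda>k. g (blk N k b)) [0..<n]) * (K 0 a * (\<Prod>k<n. K (Suc k) (blk N k b))))"
    by (simp add: sum_bs_append map_upt_Suc prod.lessThan_Suc_shift blk0 blkS del: upt_Suc prod.lessThan_Suc)
  also have "\<dots> = (\<Sum>a\<in>bitstrings N. K 0 a * (\<Sum>b\<in>bitstrings (n*N). H (g a # map (\<lambda>k. g (blk N k b)) [0..<n]) * (\<Prod>k<n. K (Suc k) (blk N k b))))"
    by (simp add: sum_distrib_left ac_simps)
  also have "\<dots> = (\<Sum>a\<in>bitstrings N. K 0 a * R (g a))"
  proof (rule sum.cong[OF refl])
    fix a
    show "K 0 a * (\<Sum>b\<in>bitstrings (n*N). H (g a # map (\<lambda>k. g (blk N k b)) [0..<n]) * (\<Prod>k<n. K (Suc k) (blk N k b))) = K 0 a * R (g a)"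
      unfolding R_def S_def using Suc.IH[of "\<lambda>w. H (g a # w)" "\<lambda>k. K (Suc k)"] by simp
  qed
  also have "\<dots> = (\<Sum>v\<in>UNIV. \<Sum>a\<in>{a\<in>bitstrings N. g a = v}. K 0 a * R (g a))"
    by (rule sum.group[symmetric]) (auto simp: bs_finite)
  also have "\<dots> = (\<Sum>v\<in>UNIV. S 0 v * R v)"
    unfolding S_def by (simp add: sum_distrib_right)
  also have "\<dots> = (\<Sum>w\<in>bitstrings (Suc n). H w * (\<Prod>k<Suc n. S k (w!k)))"
    unfolding R_def sum_bs_Suc by (simp add: prod.lessThan_Suc_shift sum_distrib_left ac_simps del: prod.lessThan_Suc)
  finally show ?case unfolding S_def .
qed

definition cert :: "nat \<Rightarrow> (bool list \<Rightarrow> bool) \<Rightarrow> (bool list \<Rightarrow> bool list \<Rightarrow> real) \<Rightarrow> (nat \<Rightarrow> bool list \<Rightarrow> real) \<Rightarrow> real \<Rightarrow> bool" where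
  "cert N g G u c \<longleftrightarrow>
     (\<forall>x\<in>bitstrings N. \<forall>y\<in>bitstrings N. G x y \<ge> 0 \<and> G x y = G y x \<and> (G x y \<noteq> 0 \<longrightarrow> g x \<noteq> g y)) \<and>
     (\<forall>x\<in>bitstrings N. (\<Sum>y\<in>bitstrings N. G x y) = 1) \<and>
     (\<forall>i<N. \<forall>x\<in>bitstrings N. u i x > 0 \<and>
        (\<Sum>y\<in>bitstrings N. if x!i \<noteq> y!i then G x y * u i y else 0) \<le> c * u i x)"

lemma amgm: assumes "a \<ge> 0" "b \<ge> 0" "r > 0" shows "sqrt (a * b) \<le> (a * r + b / r) / 2"
proof -
  have "a * b = (a * r) * (b / r)" using assms by simp
  then show ?thesis using arith_geo_mean_sqrt[of "a*r" "b/r"] assms by simp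
qed

lemma lb:
  assumes cert: "cert N g G u c" and p: "p \<in> prob_families N"
  shows "\<exists>x\<in>bitstrings N. \<exists>y\<in>bitstrings N. g x \<noteq> g y \<and> pair_weight N p x y \<le> c"
proof (rule ccontr)
  assume H: "\<not> ?thesis"
  define S where "S = bitstrings N"
  have fin: "finite S" by (simp add: S_def bs_finite)
  have Hpw: "pair_weight N p x y > c" if "x\<in>S" "y\<in>S" "g x \<noteq> g y" for x y
  proof (rule ccontr)
    assume "\<not> pair_weight N p x y > c"
    then have "pair_weight N p x y \<le> c" by simp
    with that H show False unfolding S_def by blast
  qed
  have C1: "\<forall>x\<in>S. \<forall>y\<in>S. G x y \<ge> 0 \<and> G x y = G y x \<and> (G x y \<noteq> 0 \<longrightarrow> g x \<noteq> g y)"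
    and C2: "\<forall>x\<in>S. (\<Sum>y\<in>S. G x y) = 1"
    and C3: "\<forall>i<N. \<forall>x\<in>S. u i x > 0 \<and> (\<Sum>y\<in>S. if x!i \<noteq> y!i then G x y * u i y else 0) \<le> c * u i x"
    using cert unfolding cert_def S_def by blast+
  have G0: "\<And>x y. x\<in>S \<Longrightarrow> y\<in>S \<Longrightarrow> G x y \<ge> 0" using C1 by blast
  have Gs: "\<And>x y. x\<in>S \<Longrightarrow> y\<in>S \<Longrightarrow> G x y = G y x" using C1 by blast
  have Gd: "\<And>x y. x\<in>S \<Longrightarrow> y\<in>S \<Longrightarrow> G x y \<noteq> 0 \<Longrightarrow> g x \<noteq> g y" using C1 by blast
  have Gr: "\<And>x. x\<in>S \<Longrightarrow> (\<Sum>y\<in>S. G x y) = 1" using C2 by blast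
  have up: "\<And>i x. i<N \<Longrightarrow> x\<in>S \<Longrightarrow> u i x > 0" using C3 by blast
  have uc: "\<And>i x. i<N \<Longrightarrow> x\<in>S \<Longrightarrow> (\<Sum>y\<in>S. if x!i \<noteq> y!i then G x y * u i y else 0) \<le> c * u i x"
    using C3 by blast
  have p0: "\<And>x i. x\<in>S \<Longrightarrow> i<N \<Longrightarrow> p x i \<ge> 0" using p unfolding prob_families_def S_def by blast
  have p1: "\<And>x. x\<in>S \<Longrightarrow> (\<Sum>i<N. p x i) = 1" using p unfolding prob_families_def S_def by blast
  have termle: "G x y * c \<le> G x y * pair_weight N p x y" if "x\<in>S" "y\<in>S" for x y
  proof (cases "G x y = 0")
    case False
    then show ?thesis using Hpw[OF that Gd[OF that False]] G0[OF that]
      by (intro mult_left_mono) auto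
  qed simp
  have strict: "(\<Sum>x\<in>S. \<Sum>y\<in>S. G x y * c) < (\<Sum>x\<in>S. \<Sum>y\<in>S. G x y * pair_weight N p x y)"
  proof (rule sum_strict_mono_ex1[OF fin])
    show "\<forall>x\<in>S. (\<Sum>y\<in>S. G x y * c) \<le> (\<Sum>y\<in>S. G x y * pair_weight N p x y)"
      using termle by (auto intro!: sum_mono)
    define x0 where "x0 = replicate N False"
    have x0S: "x0 \<in> S" by (simp add: S_def x0_def bs_ne)
    have "\<exists>y\<in>S. G x0 y \<noteq> 0"
    proof (rule ccontr)
      assume "\<not> (\<exists>y\<in>S. G x0 y \<noteq> 0)"
      then have "(\<Sum>y\<in>S. G x0 y) = 0" by simp
      then show False using Gr[OF x0S] by simp
    qed
    then obtain y0 where y0: "y0 \<in> S" "G x0 y0 \<noteq> 0" by blast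
    have "(\<Sum>y\<in>S. G x0 y * c) < (\<Sum>y\<in>S. G x0 y * pair_weight N p x0 y)"
    proof (rule sum_strict_mono_ex1[OF fin])
      show "\<forall>y\<in>S. G x0 y * c \<le> G x0 y * pair_weight N p x0 y" using termle x0S by auto
      have "G x0 y0 > 0" using G0[OF x0S y0(1)] y0(2) by simp
      then have "G x0 y0 * c < G x0 y0 * pair_weight N p x0 y0"
        using Hpw[OF x0S y0(1) Gd[OF x0S y0]] by simp
      then show "\<exists>y\<in>S. G x0 y * c < G x0 y * pair_weight N p x0 y" using y0 by blast
    qed
    then show "\<exists>x\<in>S. (\<Sum>y\<in>S. G x y * c) < (\<Sum>y\<in>S. G x y * pair_weight N p x y)"
      using x0S by blast
  qed
  have lhs: "(\<Sum>x\<in>S. \<Sum>y\<in>S. G x y * c) = c * card S"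
  proof -
    have "(\<Sum>x\<in>S. \<Sum>y\<in>S. G x y * c) = (\<Sum>x\<in>S. c)"
      by (intro sum.cong refl) (simp add: sum_distrib_right[symmetric] Gr)
    then show ?thesis by simp
  qed
  define A where "A x y i = (if x!i \<noteq> y!i then G x y * (p x i * u i y / u i x) else 0)" for x y i
  have step1: "G x y * pair_weight N p x y \<le> (\<Sum>i<N. (A x y i + A y x i) / 2)" if xS: "x\<in>S" and yS: "y\<in>S" for x y
  proof -
    have "G x y * pair_weight N p x y = (\<Sum>i<N. if x!i \<noteq> y!i then G x y * sqrt (p x i * p y i) else 0)"
      unfolding pw_alt sum_distrib_left by (intro sum.cong refl) simp
    also have "\<dots> \<le> (\<Sum>i<N. (A x y i + A y x i) / 2)"
    proof (rule sum_mono)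
      fix i assume "i \<in> {..<N}"
      then have i: "i < N" by simp
      have r: "u i y / u i x > 0" using up[OF i xS] up[OF i yS] by simp
      have "sqrt (p x i * p y i) \<le> (p x i * (u i y / u i x) + p y i / (u i y / u i x)) / 2"
        by (rule amgm[OF p0[OF xS i] p0[OF yS i] r])
      then have "G x y * sqrt (p x i * p y i) \<le> G x y * ((p x i * (u i y / u i x) + p y i / (u i y / u i x)) / 2)"
        by (rule mult_left_mono) (rule G0[OF xS yS])
      also have "\<dots> = (G x y * (p x i * u i y / u i x) + G y x * (p y i * u i x / u i y)) / 2"
        using Gs[OF xS yS] by (simp add: field_simps)
      finally show "(if x!i \<noteq> y!i then G x y * sqrt (p x i * p y i) else 0) \<le> (A x y i + A y x i) / 2"
        unfolding A_def by auto
    qed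
    finally show ?thesis .
  qed
  have swap: "(\<Sum>x\<in>S. \<Sum>y\<in>S. \<Sum>i<N. A y x i) = (\<Sum>x\<in>S. \<Sum>y\<in>S. \<Sum>i<N. A x y i)"
    by (rule sum.swap)
  have step3: "(\<Sum>x\<in>S. \<Sum>y\<in>S. \<Sum>i<N. A x y i) \<le> c * card S"
  proof -
    have "(\<Sum>x\<in>S. \<Sum>y\<in>S. \<Sum>i<N. A x y i) = (\<Sum>x\<in>S. \<Sum>i<N. p x i / u i x * (\<Sum>y\<in>S. if x!i \<noteq> y!i then G x y * u i y else 0))"
      unfolding A_def
      by (intro sum.cong refl) (subst sum.swap, auto simp: sum_distrib_left intro!: sum.cong)
    also have "\<dots> \<le> (\<Sum>x\<in>S. \<Sum>i<N. p x i / u i x * (c * u i x))"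
    proof (intro sum_mono)
      fix x i assume "x \<in> S" "i \<in> {..<N}"
      then show "p x i / u i x * (\<Sum>y\<in>S. if x!i \<noteq> y!i then G x y * u i y else 0) \<le> p x i / u i x * (c * u i x)"
        using uc[of i x] up[of i x] p0[of x i] by (intro mult_left_mono) auto
    qed
    also have "\<dots> = (\<Sum>x\<in>S. c * (\<Sum>i<N. p x i))"
      by (intro sum.cong refl) (auto simp: sum_distrib_left intro!: sum.cong dest: up)
    also have "\<dots> = c * card S" using p1 by simp
    finally show ?thesis .
  qed
  have "(\<Sum>x\<in>S. \<Sum>y\<in>S. G x y * pair_weight N p x y) \<le> (\<Sum>x\<in>S. \<Sum>y\<in>S. \<Sum>i<N. (A x y i + A y x i) / 2)"
    using step1 by (intro sum_mono) auto
  also have "\<dots> = (\<Sum>x\<in>S. \<Sum>y\<in>S. \<Sum>i<N. A x y i) / 2 + (\<Sum>x\<in>S. \<Sum>y\<in>S. \<Sum>i<N. A y x i) / 2"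
    by (simp add: sum.distrib add_divide_distrib sum_divide_distrib)
  also have "\<dots> \<le> c * card S" using swap step3 by simp
  finally show False using strict lhs by simp
qed

lemma sumPI_lower:
  assumes "cert N g G u c" "c > 0"
  shows "ereal (1/c) \<le> sumPI N g"
  unfolding sumPI_def
proof (rule INF_greatest)
  fix p assume p: "p \<in> prob_families N"
  obtain x y where xy: "x \<in> bitstrings N" "y \<in> bitstrings N" "g x \<noteq> g y" "pair_weight N p x y \<le> c"
    using lb[OF assms(1) p] by blast
  have "ereal (1/c) \<le> inv_weight (pair_weight N p x y)"
  proof (cases "pair_weight N p x y = 0")
    case False
    have "pair_weight N p x y \<ge> 0"
      using p xy by (intro pw_nonneg) (auto simp: prob_families_def)
    then have "pair_weight N p x y > 0" using False by simp
    then have "1/c \<le> 1 / pair_weight N p x y" using xy(4) assms(2) by (simp add: frac_le)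
    then show ?thesis using False by (simp add: inv_weight_def)
  qed (simp add: inv_weight_def)
  also have "\<dots> \<le> sumPI_obj N g p"
    unfolding sumPI_obj_def
    by (rule SUP_upper2[where i="(x,y)"]) (use xy in auto)
  finally show "ereal (1/c) \<le> sumPI_obj N g p" .
qed

lemma sumPI_upper:
  assumes p: "p \<in> prob_families N" and a: "a > 0"
    and h: "\<forall>x\<in>bitstrings N. \<forall>y\<in>bitstrings N. g x \<noteq> g y \<longrightarrow> a \<le> pair_weight N p x y"
  shows "sumPI N g \<le> ereal (1/a)"
proof -
  have "sumPI N g \<le> sumPI_obj N g p" unfolding sumPI_def by (rule INF_lower[OF p])
  also have "\<dots> \<le> ereal (1/a)"
    unfolding sumPI_obj_def
  proof (rule SUP_least)
    fix xy assume "xy \<in> {(x, y). x \<in> bitstrings N \<and> y \<in> bitstrings N \<and> g x \<noteq> g y}"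
    then have w: "a \<le> pair_weight N p (fst xy) (snd xy)" using h by auto
    then have "pair_weight N p (fst xy) (snd xy) \<noteq> 0" using a by auto
    moreover have "1 / pair_weight N p (fst xy) (snd xy) \<le> 1 / a" using w a by (simp add: frac_le)
    ultimately show "inv_weight (pair_weight N p (fst xy) (snd xy)) \<le> ereal (1/a)"
      by (simp add: inv_weight_def)
  qed
  finally show ?thesis .
qed

lemma divmodN: assumes "i < (N::nat)" shows "(j*N+i) div N = j" "(j*N+i) mod N = i"
  using assms by auto

lemma ub_comp:
  fixes n N :: nat
  assumes Npos: "N > 0"
    and pf: "pf \<in> prob_families n" and pg: "pg \<in> prob_families N"
    and hf: "\<forall>z\<in>bitstrings n. \<forall>w\<in>bitstrings n. f z \<noteq> f w \<longrightarrow> a \<le> pair_weight n pf z w"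
    and hg: "\<forall>x\<in>bitstrings N. \<forall>y\<in>bitstrings N. g x \<noteq> g y \<longrightarrow> b \<le> pair_weight N pg x y"
    and b0: "b \<ge> 0"
  shows "(\<lambda>x i. pf (map (\<lambda>j. g (blk N j x)) [0..<n]) (i div N) * pg (blk N (i div N) x) (i mod N)) \<in> prob_families (n*N) \<and>
    (\<forall>x\<in>bitstrings (n*N). \<forall>y\<in>bitstrings (n*N). compf n N f g x \<noteq> compf n N f g y \<longrightarrow>
       a * b \<le> pair_weight (n*N) (\<lambda>x i. pf (map (\<lambda>j. g (blk N j x)) [0..<n]) (i div N) * pg (blk N (i div N) x) (i mod N)) x y)"
proof -
  define z where "z x = map (\<lambda>j. g (blk N j x)) [0..<n]" for x
  define P where "P x i = pf (z x) (i div N) * pg (blk N (i div N) x) (i mod N)" for x i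
  have zbs: "z x \<in> bitstrings n" for x by (simp add: z_def bitstrings_def)
  have zj: "j < n \<Longrightarrow> z x ! j = g (blk N j x)" for x j by (simp add: z_def)
  have pf0: "\<And>z i. z \<in> bitstrings n \<Longrightarrow> i < n \<Longrightarrow> pf z i \<ge> 0"
    and pf1: "\<And>z. z\<in>bitstrings n \<Longrightarrow> (\<Sum>i<n. pf z i) = 1"
    using pf unfolding prob_families_def by blast+
  have pg0: "\<And>z i. z \<in> bitstrings N \<Longrightarrow> i < N \<Longrightarrow> pg z i \<ge> 0"
    and pg1: "\<And>z. z\<in>bitstrings N \<Longrightarrow> (\<Sum>i<N. pg z i) = 1"
    using pg unfolding prob_families_def by blast+
  have Pprob: "P \<in> prob_families (n*N)"
    unfolding prob_families_def
  proof (intro CollectI ballI conjI allI impI)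
    fix x assume x: "x \<in> bitstrings (n*N)"
    fix i assume i: "i < n*N"
    then have j: "i div N < n" by (simp add: less_mult_imp_div_less)
    have "i mod N < N" using Npos by simp
    then show "P x i \<ge> 0" unfolding P_def
      using pf0[OF zbs j] pg0[OF blk_bs[OF x j]] by simp
  next
    fix x assume x: "x \<in> bitstrings (n*N)"
    have "(\<Sum>i<n*N. P x i) = (\<Sum>j<n. \<Sum>i<N. P x (j*N+i))" by (rule sum_split)
    also have "\<dots> = (\<Sum>j<n. pf (z x) j * (\<Sum>i<N. pg (blk N j x) i))"
      unfolding P_def by (intro sum.cong refl) (simp add: divmodN sum_distrib_left)
    also have "\<dots> = (\<Sum>j<n. pf (z x) j)"
      using pg1[OF blk_bs[OF x]] by simp
    also have "\<dots> = 1" using pf1[OF zbs] .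
    finally show "(\<Sum>i<n*N. P x i) = 1" .
  qed
  have W: "a * b \<le> pair_weight (n*N) P x y"
    if x: "x \<in> bitstrings (n*N)" and y: "y \<in> bitstrings (n*N)" and neq: "compf n N f g x \<noteq> compf n N f g y" for x y
  proof -
    have lx: "length x = n*N" and ly: "length y = n*N" using x y by (auto simp: bitstrings_def)
    have "pair_weight (n*N) P x y = (\<Sum>j<n. \<Sum>i<N. if x!(j*N+i) \<noteq> y!(j*N+i) then sqrt (P x (j*N+i) * P y (j*N+i)) else 0)"
      unfolding pw_alt by (rule sum_split)
    also have "\<dots> = (\<Sum>j<n. sqrt (pf (z x) j * pf (z y) j) * pair_weight N pg (blk N j x) (blk N j y))"
    proof (rule sum.cong[OF refl])
      fix j assume "j \<in> {..<n}"
      then have j: "j < n" by simp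
      show "(\<Sum>i<N. if x!(j*N+i) \<noteq> y!(j*N+i) then sqrt (P x (j*N+i) * P y (j*N+i)) else 0)
          = sqrt (pf (z x) j * pf (z y) j) * pair_weight N pg (blk N j x) (blk N j y)"
        unfolding pw_alt sum_distrib_left
      proof (rule sum.cong[OF refl])
        fix i assume "i \<in> {..<N}"
        then have i: "i < N" by simp
        have "sqrt (P x (j*N+i) * P y (j*N+i)) = sqrt (pf (z x) j * pf (z y) j) * sqrt (pg (blk N j x) i * pg (blk N j y) i)"
          unfolding P_def divmodN[OF i] real_sqrt_mult[symmetric] by (simp add: ac_simps)
        then show "(if x!(j*N+i) \<noteq> y!(j*N+i) then sqrt (P x (j*N+i) * P y (j*N+i)) else 0)
          = sqrt (pf (z x) j * pf (z y) j) * (if blk N j x ! i \<noteq> blk N j y ! i then sqrt (pg (blk N j x) i * pg (blk N j y) i) else 0)"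
          using blk_nth[OF lx j i] blk_nth[OF ly j i] by simp
      qed
    qed
    also have "\<dots> \<ge> (\<Sum>j<n. if z x ! j \<noteq> z y ! j then b * sqrt (pf (z x) j * pf (z y) j) else 0)"
    proof (rule sum_mono)
      fix j assume "j \<in> {..<n}"
      then have j: "j < n" by simp
      have s0: "sqrt (pf (z x) j * pf (z y) j) \<ge> 0" using pf0[OF zbs j] pf0[OF zbs j] by simp
      have bx: "blk N j x \<in> bitstrings N" and byy: "blk N j y \<in> bitstrings N" using blk_bs x y j by auto
      have pw0: "pair_weight N pg (blk N j x) (blk N j y) \<ge> 0"
        using pg0[OF bx] pg0[OF byy] by (intro pw_nonneg) auto
      show "(if z x ! j \<noteq> z y ! j then b * sqrt (pf (z x) j * pf (z y) j) else 0)
          \<le> sqrt (pf (z x) j * pf (z y) j) * pair_weight N pg (blk N j x) (blk N j y)"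
      proof (cases "z x ! j \<noteq> z y ! j")
        case True
        then have "b \<le> pair_weight N pg (blk N j x) (blk N j y)" using hg bx byy zj[OF j] by auto
        then have "b * sqrt (pf (z x) j * pf (z y) j) \<le> pair_weight N pg (blk N j x) (blk N j y) * sqrt (pf (z x) j * pf (z y) j)"
          by (rule mult_right_mono[OF _ s0])
        then show ?thesis using True by (simp add: mult.commute)
      qed (use s0 pw0 in simp)
    qed
    finally have "(\<Sum>j<n. if z x ! j \<noteq> z y ! j then b * sqrt (pf (z x) j * pf (z y) j) else 0) \<le> pair_weight (n*N) P x y" .
    moreover have "(\<Sum>j<n. if z x ! j \<noteq> z y ! j then b * sqrt (pf (z x) j * pf (z y) j) else 0) = b * pair_weight n pf (z x) (z y)"
      unfolding pw_alt sum_distrib_left by (intro sum.cong refl) simp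
    moreover have "a \<le> pair_weight n pf (z x) (z y)"
      using hf zbs neq unfolding compf_def z_def[symmetric] by blast
    then have "b * a \<le> b * pair_weight n pf (z x) (z y)" using b0 by (rule mult_left_mono)
    ultimately show ?thesis by (simp add: mult.commute)
  qed
  show ?thesis using Pprob W unfolding P_def z_def by blast
qed

definition Mf :: "(bool list \<Rightarrow> bool list \<Rightarrow> real) \<Rightarrow> bool \<Rightarrow> bool list \<Rightarrow> bool list \<Rightarrow> real" where
  "Mf G b s t = (if b then G s t else if s = t then 1 else 0)"

lemma lb_comp:
  fixes n N :: nat
  assumes cf: "cert n f GA uA cA" and cg: "cert N g GB uB cB" and cB: "cB \<ge> 0" and Npos: "N > 0"
  shows "cert (n*N) (compf n N f g)
     (\<lambda>x y. GA (map (\<lambda>j. g (blk N j x)) [0..<n]) (map (\<lambda>j. g (blk N j y)) [0..<n]) *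
        (\<Prod>k<n. Mf GB (g (blk N k x) \<noteq> g (blk N k y)) (blk N k x) (blk N k y)))
     (\<lambda>i x. uA (i div N) (map (\<lambda>j. g (blk N j x)) [0..<n]) * uB (i mod N) (blk N (i div N) x))
     (cA * cB)"
proof -
  define z where "z x = map (\<lambda>j. g (blk N j x)) [0..<n]" for x
  have zbs: "z x \<in> bitstrings n" for x by (simp add: z_def bitstrings_def)
  have zj: "j < n \<Longrightarrow> z x ! j = g (blk N j x)" for x j by (simp add: z_def)
  have A1: "\<forall>x\<in>bitstrings n. \<forall>y\<in>bitstrings n. GA x y \<ge> 0 \<and> GA x y = GA y x \<and> (GA x y \<noteq> 0 \<longrightarrow> f x \<noteq> f y)"
    and A2: "\<forall>x\<in>bitstrings n. (\<Sum>y\<in>bitstrings n. GA x y) = 1"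
    and A3: "\<forall>i<n. \<forall>x\<in>bitstrings n. uA i x > 0 \<and> (\<Sum>y\<in>bitstrings n. if x!i \<noteq> y!i then GA x y * uA i y else 0) \<le> cA * uA i x"
    using cf unfolding cert_def by blast+
  have B1: "\<forall>x\<in>bitstrings N. \<forall>y\<in>bitstrings N. GB x y \<ge> 0 \<and> GB x y = GB y x \<and> (GB x y \<noteq> 0 \<longrightarrow> g x \<noteq> g y)"
    and B2: "\<forall>x\<in>bitstrings N. (\<Sum>y\<in>bitstrings N. GB x y) = 1"
    and B3: "\<forall>i<N. \<forall>x\<in>bitstrings N. uB i x > 0 \<and> (\<Sum>y\<in>bitstrings N. if x!i \<noteq> y!i then GB x y * uB i y else 0) \<le> cB * uB i x"
    using cg unfolding cert_def by blast+
  have fin: "finite (bitstrings N)" by (rule bs_finite)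
  have Mf0: "Mf GB b s t \<ge> 0" if "s \<in> bitstrings N" "t \<in> bitstrings N" for b s t
    using B1 that by (simp add: Mf_def)
  have Mfs: "Mf GB (g s \<noteq> g t) s t = Mf GB (g t \<noteq> g s) t s" if "s \<in> bitstrings N" "t \<in> bitstrings N" for s t
    using B1 that by (auto simp: Mf_def)
  have GBout: "GB s t = 0" if "s \<in> bitstrings N" "t \<in> bitstrings N" "g t = g s" for s t
    using B1 that by blast
  have filt: "(\<Sum>t\<in>{t\<in>bitstrings N. g t = v}. GB s t * E t) = (\<Sum>t\<in>bitstrings N. GB s t * E t)"
    if s: "s \<in> bitstrings N" and v: "v \<noteq> g s" for s v and E :: "bool list \<Rightarrow> real"
  proof (rule sum.mono_neutral_left[OF fin])
    show "{t\<in>bitstrings N. g t = v} \<subseteq> bitstrings N" by blast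
    show "\<forall>t\<in>bitstrings N - {t\<in>bitstrings N. g t = v}. GB s t * E t = 0"
    proof
      fix t assume "t \<in> bitstrings N - {t\<in>bitstrings N. g t = v}"
      then have "t \<in> bitstrings N" "g t = g s" using v by auto
      then show "GB s t * E t = 0" using GBout[OF s] by simp
    qed
  qed
  have Sk: "(\<Sum>t\<in>{t\<in>bitstrings N. g t = v}. Mf GB (g s \<noteq> g t) s t) = 1" if s: "s \<in> bitstrings N" for s v
  proof (cases "v = g s")
    case True
    have "(\<Sum>t\<in>{t\<in>bitstrings N. g t = v}. Mf GB (g s \<noteq> g t) s t) = (\<Sum>t\<in>{t\<in>bitstrings N. g t = v}. if s = t then 1 else 0)"
      using True by (intro sum.cong refl) (auto simp: Mf_def)
    also have "\<dots> = 1" using True s fin by simp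
    finally show ?thesis .
  next
    case False
    have "(\<Sum>t\<in>{t\<in>bitstrings N. g t = v}. Mf GB (g s \<noteq> g t) s t) = (\<Sum>t\<in>{t\<in>bitstrings N. g t = v}. GB s t * 1)"
      using False by (intro sum.cong refl) (auto simp: Mf_def)
    also have "\<dots> = (\<Sum>t\<in>bitstrings N. GB s t * 1)" by (rule filt[OF s False])
    also have "\<dots> = 1" using B2 s by simp
    finally show ?thesis .
  qed
  define GG where "GG x y = GA (z x) (z y) * (\<Prod>k<n. Mf GB (g (blk N k x) \<noteq> g (blk N k y)) (blk N k x) (blk N k y))" for x y
  define UU where "UU i x = uA (i div N) (z x) * uB (i mod N) (blk N (i div N) x)" for i x
  have P1: "\<forall>x\<in>bitstrings (n*N). \<forall>y\<in>bitstrings (n*N). GG x y \<ge> 0 \<and> GG x y = GG y x \<and> (GG x y \<noteq> 0 \<longrightarrow> compf n N f g x \<noteq> compf n N f g y)"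
  proof (intro ballI conjI impI)
    fix x y assume x: "x \<in> bitstrings (n*N)" and y: "y \<in> bitstrings (n*N)"
    show "GG x y \<ge> 0" unfolding GG_def
      using A1 zbs blk_bs[OF x] blk_bs[OF y] Mf0 by (intro mult_nonneg_nonneg prod_nonneg) auto
    show "GG x y = GG y x" unfolding GG_def
    proof (intro arg_cong2[where f="(*)"] prod.cong refl)
      show "GA (z x) (z y) = GA (z y) (z x)" using A1 zbs by blast
      fix k assume "k \<in> {..<n}"
      then show "Mf GB (g (blk N k x) \<noteq> g (blk N k y)) (blk N k x) (blk N k y) = Mf GB (g (blk N k y) \<noteq> g (blk N k x)) (blk N k y) (blk N k x)"
        using Mfs blk_bs[OF x] blk_bs[OF y] by simp
    qed
    assume "GG x y \<noteq> 0"
    then have "GA (z x) (z y) \<noteq> 0" unfolding GG_def by auto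
    then have "f (z x) \<noteq> f (z y)" using A1 zbs by blast
    then show "compf n N f g x \<noteq> compf n N f g y" by (simp add: compf_def z_def)
  qed
  have P2: "\<forall>x\<in>bitstrings (n*N). (\<Sum>y\<in>bitstrings (n*N). GG x y) = 1"
  proof
    fix x assume x: "x \<in> bitstrings (n*N)"
    have "(\<Sum>y\<in>bitstrings (n*N). GG x y) = (\<Sum>y\<in>bitstrings (n*N). GA (z x) (map (\<lambda>k. g (blk N k y)) [0..<n]) *
        (\<Prod>k<n. (\<lambda>k t. Mf GB (g (blk N k x) \<noteq> g t) (blk N k x) t) k (blk N k y)))"
      unfolding GG_def z_def by simp
    also have "\<dots> = (\<Sum>w\<in>bitstrings n. GA (z x) w * (\<Prod>k<n. \<Sum>t\<in>{t\<in>bitstrings N. g t = w!k}. Mf GB (g (blk N k x) \<noteq> g t) (blk N k x) t))"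
      by (rule decomp)
    also have "\<dots> = (\<Sum>w\<in>bitstrings n. GA (z x) w)"
      using Sk blk_bs[OF x] by simp
    also have "\<dots> = 1" using A2 zbs by blast
    finally show "(\<Sum>y\<in>bitstrings (n*N). GG x y) = 1" .
  qed
  have P3: "\<forall>i<n*N. \<forall>x\<in>bitstrings (n*N). UU i x > 0 \<and>
      (\<Sum>y\<in>bitstrings (n*N). if x!i \<noteq> y!i then GG x y * UU i y else 0) \<le> (cA * cB) * UU i x"
  proof (intro allI impI ballI conjI)
    fix i x assume i: "i < n*N" and x: "x \<in> bitstrings (n*N)"
    define j where "j = i div N"
    define i0 where "i0 = i mod N"
    have j: "j < n" unfolding j_def using i by (simp add: less_mult_imp_div_less)
    have i0: "i0 < N" unfolding i0_def using Npos by simp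
    have ieq: "i = j*N + i0" unfolding j_def i0_def by simp
    define s where "s = blk N j x"
    have s: "s \<in> bitstrings N" unfolding s_def using blk_bs[OF x j] .
    have uAp: "uA j (z x) > 0" using A3 j zbs by blast
    have uBp: "uB i0 s > 0" using B3 i0 s by blast
    show "UU i x > 0" unfolding UU_def j_def[symmetric] i0_def[symmetric] s_def[symmetric]
      using uAp uBp by simp
    define E where "E t = (if s!i0 \<noteq> t!i0 then uB i0 t else 0)" for t
    define K where "K k t = Mf GB (g (blk N k x) \<noteq> g t) (blk N k x) t * (if k = j then E t else 1)" for k t
    define H where "H w = GA (z x) w * uA j w" for w
    have lx: "length x = n*N" using x by (simp add: bitstrings_def)
    have summand: "(if x!i \<noteq> y!i then GG x y * UU i y else 0)
        = H (map (\<lambda>k. g (blk N k y)) [0..<n]) * (\<Prod>k<n. K k (blk N k y))"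
      if y: "y \<in> bitstrings (n*N)" for y
    proof -
      have ly: "length y = n*N" using y by (simp add: bitstrings_def)
      have xi: "x!i = s!i0" unfolding s_def ieq using blk_nth[OF lx j i0] by simp
      have yi: "y!i = blk N j y!i0" unfolding ieq using blk_nth[OF ly j i0] by simp
      have "(\<Prod>k<n. K k (blk N k y)) = (\<Prod>k<n. Mf GB (g (blk N k x) \<noteq> g (blk N k y)) (blk N k x) (blk N k y)) *
          (\<Prod>k<n. if k = j then E (blk N k y) else 1)"
        by (simp only: K_def prod.distrib)
      also have "(\<Prod>k<n. if k = j then E (blk N k y) else 1) = E (blk N j y)"
        using j by simp
      finally have pk: "(\<Prod>k<n. K k (blk N k y)) = (\<Prod>k<n. Mf GB (g (blk N k x) \<noteq> g (blk N k y)) (blk N k x) (blk N k y)) * E (blk N j y)" .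
      show ?thesis
        unfolding pk H_def E_def GG_def UU_def j_def[symmetric] i0_def[symmetric] xi yi z_def
        by simp
    qed
    have "(\<Sum>y\<in>bitstrings (n*N). if x!i \<noteq> y!i then GG x y * UU i y else 0)
        = (\<Sum>y\<in>bitstrings (n*N). H (map (\<lambda>k. g (blk N k y)) [0..<n]) * (\<Prod>k<n. K k (blk N k y)))"
      using summand by (rule sum.cong[OF refl])
    also have "\<dots> = (\<Sum>w\<in>bitstrings n. H w * (\<Prod>k<n. \<Sum>t\<in>{t\<in>bitstrings N. g t = w!k}. K k t))"
      by (rule decomp)
    also have "\<dots> = (\<Sum>w\<in>bitstrings n. H w * (\<Sum>t\<in>{t\<in>bitstrings N. g t = w!j}. K j t))"
    proof (rule sum.cong[OF refl])
      fix w assume w: "w \<in> bitstrings n"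
      have "(\<Prod>k<n. \<Sum>t\<in>{t\<in>bitstrings N. g t = w!k}. K k t) = (\<Prod>k<n. if k = j then (\<Sum>t\<in>{t\<in>bitstrings N. g t = w!j}. K j t) else 1)"
      proof (rule prod.cong[OF refl])
        fix k assume k: "k \<in> {..<n}"
        show "(\<Sum>t\<in>{t\<in>bitstrings N. g t = w!k}. K k t) = (if k = j then (\<Sum>t\<in>{t\<in>bitstrings N. g t = w!j}. K j t) else 1)"
        proof (cases "k = j")
          case False
          then show ?thesis unfolding K_def using Sk[OF blk_bs[OF x]] k by simp
        qed simp
      qed
      also have "\<dots> = (\<Sum>t\<in>{t\<in>bitstrings N. g t = w!j}. K j t)" using j by simp
      finally show "H w * (\<Prod>k<n. \<Sum>t\<in>{t\<in>bitstrings N. g t = w!k}. K k t) = H w * (\<Sum>t\<in>{t\<in>bitstrings N. g t = w!j}. K j t)"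
        by simp
    qed
    also have "\<dots> \<le> (\<Sum>w\<in>bitstrings n. H w * (if z x ! j \<noteq> w!j then cB * uB i0 s else 0))"
    proof (rule sum_mono)
      fix w assume w: "w \<in> bitstrings n"
      have H0: "H w \<ge> 0" unfolding H_def using A1 A3 zbs w j
        by (intro mult_nonneg_nonneg) (auto intro: less_imp_le)
      have Kj: "K j t = Mf GB (g s \<noteq> g t) s t * E t" for t unfolding K_def s_def by simp
      have "(\<Sum>t\<in>{t\<in>bitstrings N. g t = w!j}. K j t) \<le> (if z x ! j \<noteq> w!j then cB * uB i0 s else 0)"
      proof (cases "w!j = g s")
        case True
        have "(\<Sum>t\<in>{t\<in>bitstrings N. g t = w!j}. K j t) = (\<Sum>t\<in>{t\<in>bitstrings N. g t = w!j}. 0)"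
          unfolding Kj using True by (intro sum.cong refl) (auto simp: Mf_def E_def)
        then show ?thesis using cB uBp by simp
      next
        case False
        have "(\<Sum>t\<in>{t\<in>bitstrings N. g t = w!j}. K j t) = (\<Sum>t\<in>{t\<in>bitstrings N. g t = w!j}. GB s t * E t)"
          unfolding Kj using False by (intro sum.cong refl) (auto simp: Mf_def)
        also have "\<dots> = (\<Sum>t\<in>bitstrings N. GB s t * E t)" by (rule filt[OF s False])
        also have "\<dots> = (\<Sum>t\<in>bitstrings N. if s!i0 \<noteq> t!i0 then GB s t * uB i0 t else 0)"
          unfolding E_def by (intro sum.cong refl) simp
        also have "\<dots> \<le> cB * uB i0 s" using B3 i0 s by blast
        finally show ?thesis using False zj[OF j] s_def by simp
      qed
      then show "H w * (\<Sum>t\<in>{t\<in>bitstrings N. g t = w!j}. K j t) \<le> H w * (if z x ! j \<noteq> w!j then cB * uB i0 s else 0)"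
        using H0 by (rule mult_left_mono)
    qed
    also have "\<dots> = (cB * uB i0 s) * (\<Sum>w\<in>bitstrings n. if z x ! j \<noteq> w!j then GA (z x) w * uA j w else 0)"
      unfolding H_def sum_distrib_left by (intro sum.cong refl) simp
    also have "\<dots> \<le> (cB * uB i0 s) * (cA * uA j (z x))"
    proof (rule mult_left_mono)
      show "(\<Sum>w\<in>bitstrings n. if z x ! j \<noteq> w!j then GA (z x) w * uA j w else 0) \<le> cA * uA j (z x)"
        using A3 j zbs by blast
      show "0 \<le> cB * uB i0 s" using cB uBp by simp
    qed
    also have "\<dots> = (cA * cB) * UU i x"
      unfolding UU_def j_def[symmetric] i0_def[symmetric] s_def[symmetric] by simp
    finally show "(\<Sum>y\<in>bitstrings (n*N). if x!i \<noteq> y!i then GG x y * UU i y else 0) \<le> (cA * cB) * UU i x" .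
  qed
  have "cert (n*N) (compf n N f g) GG UU (cA * cB)"
    unfolding cert_def using P1 P2 P3 by blast
  then show ?thesis unfolding GG_def UU_def z_def .
qed

definition GAL :: "((bool list * bool list) * nat) list" where
  "GAL = [(([False,False,False,False],[False,False,True,False]),3), (([False,False,True,False],[False,False,False,False]),3), (([False,False,False,False],[False,True,False,False]),3), (([False,True,False,False],[False,False,False,False]),3), (([False,False,False,False],[False,True,True,False]),2), (([False,True,True,False],[False,False,False,False]),2), (([False,False,False,False],[True,False,False,True]),2), (([True,False,False,True],[False,False,False,False]),2), (([False,False,False,True],[False,False,True,False]),2), (([False,False,True,False],[False,False,False,True]),2), (([False,False,False,True],[False,True,False,True]),3), (([False,True,False,True],[False,False,False,True]),3), (([False,False,False,True],[True,False,False,True]),3), (([True,False,False,True],[False,False,False,True]),3), (([False,False,False,True],[True,True,False,True]),2), (([True,True,False,True],[False,False,False,True]),2), (([False,False,True,False],[False,False,True,True]),3), (([False,False,True,True],[False,False,True,False]),3), (([False,False,True,False],[True,True,True,False]),2), (([True,True,True,False],[False,False,True,False]),2), (([False,False,True,True],[False,True,False,True]),2), (([False,True,False,True],[False,False,True,True]),2), (([False,False,True,True],[True,False,True,False]),2), (([True,False,True,False],[False,False,True,True]),2), (([False,False,True,True],[True,False,True,True]),3), (([True,False,True,True],[False,False,True,True]),3), (([False,True,False,False],[False,True,True,True]),2), (([False,True,True,True],[False,True,False,False]),2), (([False,True,False,False],[True,False,False,False]),2), (([True,False,False,False],[False,True,False,False]),2), (([False,True,False,False],[True,True,False,False]),3),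 (([True,True,False,False],[False,True,False,False]),3), (([False,True,False,True],[False,True,True,True]),3), (([False,True,True,True],[False,True,False,True]),3), (([False,True,False,True],[True,True,False,False]),2), (([True,True,False,False],[False,True,False,True]),2), (([False,True,True,False],[False,True,True,True]),3), (([False,True,True,True],[False,True,True,False]),3), (([False,True,True,False],[True,True,True,False]),3), (([True,True,True,False],[False,True,True,False]),3), (([False,True,True,False],[True,True,True,True]),2), (([True,True,True,True],[False,True,True,False]),2), (([False,True,True,True],[True,False,True,True]),2), (([True,False,True,True],[False,True,True,True]),2), (([True,False,False,False],[True,False,False,True]),3), (([True,False,False,True],[True,False,False,False]),3), (([True,False,False,False],[True,False,True,False]),3), (([True,False,True,False],[True,False,False,False]),3), (([True,False,False,False],[True,False,True,True]),2), (([True,False,True,True],[True,False,False,False]),2), (([True,False,False,True],[True,True,True,True]),2), (([True,True,True,True],[True,False,False,True]),2), (([True,False,True,False],[True,True,False,False]),2), (([True,True,False,False],[True,False,True,False]),2), (([True,False,True,False],[True,True,True,False]),3), (([True,True,True,False],[True,False,True,False]),3), (([True,False,True,True],[True,True,True,True]),3), (([True,True,True,True],[True,False,True,True]),3), (([True,True,False,False],[True,True,False,True]),3), (([True,True,False,True],[True,True,False,False]),3), (([True,True,False,True],[True,True,True,False]),2), (([True,True,True,False],[True,True,False,True]),2), (([True,True,False,True],[True,True,True,True]),3), (([True,True,True,True],[True,True,False,True]),3)]"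
definition L4 :: "bool list list" where
  "L4 = [[False,False,False,False], [False,False,False,True], [False,False,True,False], [False,False,True,True], [False,True,False,False], [False,True,False,True], [False,True,True,False], [False,True,True,True], [True,False,False,False], [True,False,False,True], [True,False,True,False], [True,False,True,True], [True,True,False,False], [True,True,False,True], [True,True,True,False], [True,True,True,True]]"
definition QA :: "(bool list * nat list) list" where
  "QA = [([False,False,False,False], [1,2,2,1]), ([False,False,False,True], [2,2,1,1]), ([False,False,True,False], [1,1,2,2]), ([False,False,True,True], [2,1,1,2]), ([False,True,False,False], [2,2,1,1]), ([False,True,False,True], [1,2,2,1]), ([False,True,True,False], [2,1,1,2]), ([False,True,True,True], [1,1,2,2]), ([True,False,False,False], [1,1,2,2]), ([True,False,False,True], [2,1,1,2]), ([True,False,True,False], [1,2,2,1]), ([True,False,True,True], [2,2,1,1]), ([True,True,False,False], [2,1,1,2]), ([True,True,False,True], [1,1,2,2]), ([True,True,True,False], [2,2,1,1]), ([True,True,True,True], [1,2,2,1])]"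

definition qA :: "bool list \<Rightarrow> nat \<Rightarrow> nat" where
  "qA x i = (case map_of QA x of Some l \<Rightarrow> l ! i | None \<Rightarrow> 1)"
definition gA :: "bool list \<Rightarrow> bool list \<Rightarrow> nat" where
  "gA x y = (case map_of GAL (x, y) of Some v \<Rightarrow> v | None \<Rightarrow> 0)"

lemma chk_distinct: "distinct L4" by code_simp
lemma chk_sym: "list_all (\<lambda>x. list_all (\<lambda>y. gA x y = gA y x \<and> (gA x y \<noteq> 0 \<longrightarrow> funA x \<noteq> funA y)) L4) L4"
  by code_simp
lemma chk_row: "list_all (\<lambda>x. sum_list (map (gA x) L4) = 10) L4" by code_simp
lemma chk_u: "list_all (\<lambda>x. list_all (\<lambda>i. sum_list (map (\<lambda>y. if x!i \<noteq> y!i then gA x y * qA y i else 0) L4) \<le> 4 * qA x i) [0..<4]) L4"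
  by code_simp
lemma chk_q: "list_all (\<lambda>x. sum_list (map (\<lambda>i. qA x i ^ 2) [0..<4]) = 10 \<and> list_all (\<lambda>i. qA x i > 0) [0..<4]) L4" by code_simp
lemma chk_pw: "list_all (\<lambda>x. list_all (\<lambda>y. funA x \<noteq> funA y \<longrightarrow> 4 \<le> sum_list (map (\<lambda>i. if x!i \<noteq> y!i then qA x i * qA y i else 0) [0..<4])) L4) L4"
  by code_simp

lemma bs4: "bitstrings 4 = set L4"
proof
  show "bitstrings 4 \<subseteq> set L4"
  proof
    fix x assume "x \<in> bitstrings 4"
    then have "length x = 4" by (simp add: bitstrings_def)
    then obtain a b c d where "x = [a,b,c,d]"
      by (auto simp: numeral_eq_Suc length_Suc_conv)
    then show "x \<in> set L4" by (cases a; cases b; cases c; cases d) (simp_all add: L4_def)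
  qed
  show "set L4 \<subseteq> bitstrings 4" by (simp add: L4_def bitstrings_def)
qed

lemma sl_upt: "sum_list (map f [0..<n]) = (\<Sum>i<n. f i)"
  by (simp add: interv_sum_list_conv_sum_set_nat atLeast0LessThan)

lemma sl_L4: "sum_list (map f L4) = (\<Sum>y\<in>bitstrings 4. f y)"
  unfolding bs4 by (rule sum_list_distinct_conv_sum_set[OF chk_distinct])

lemma ball4: "list_all P L4 \<Longrightarrow> x \<in> bitstrings 4 \<Longrightarrow> P x"
  by (simp add: bs4 list_all_iff)

lemma ball_upt: "list_all P [0..<n] \<Longrightarrow> i < n \<Longrightarrow> P i"
  by (simp add: list_all_iff)

definition pA :: "bool list \<Rightarrow> nat \<Rightarrow> real" where
  "pA x i = real (qA x i ^ 2) / 10"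

lemma sqrt_q: "sqrt (real (a^2) / 10 * (real (b^2) / 10)) = real (a * b) / 10"
proof -
  have "real (a^2) / 10 * (real (b^2) / 10) = (real (a*b) / 10)^2"
    by (simp add: power2_eq_square)
  then show ?thesis by simp
qed

lemma A_prob: "pA \<in> prob_families 4"
  unfolding prob_families_def
proof (intro CollectI ballI conjI allI impI)
  fix x i assume "x \<in> bitstrings 4" "i < (4::nat)"
  show "pA x i \<ge> 0" by (simp add: pA_def)
next
  fix x assume x: "x \<in> bitstrings 4"
  have "(\<Sum>i<4. qA x i ^ 2) = 10" using ball4[OF chk_q x] by (simp add: sl_upt)
  then have "real (\<Sum>i<4. qA x i ^ 2) / 10 = 1" by simp
  then show "(\<Sum>i<4. pA x i) = 1" unfolding pA_def of_nat_sum sum_divide_distrib .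
qed

lemma A_pw: "\<forall>x\<in>bitstrings 4. \<forall>y\<in>bitstrings 4. funA x \<noteq> funA y \<longrightarrow> 2/5 \<le> pair_weight 4 pA x y"
proof (intro ballI impI)
  fix x y assume x: "x \<in> bitstrings 4" and y: "y \<in> bitstrings 4" and ne: "funA x \<noteq> funA y"
  have "4 \<le> (\<Sum>i<4. if x!i \<noteq> y!i then qA x i * qA y i else 0)"
    using ball4[OF ball4[OF chk_pw x] y] ne by (simp add: sl_upt)
  then have "(4::real) \<le> real (\<Sum>i<4. if x!i \<noteq> y!i then qA x i * qA y i else 0)"
    by (metis of_nat_le_iff of_nat_numeral)
  then have "4 / 10 \<le> real (\<Sum>i<4. if x!i \<noteq> y!i then qA x i * qA y i else 0) / 10"
    by (rule divide_right_mono) simp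
  also have "\<dots> = pair_weight 4 pA x y"
    unfolding pw_alt pA_def sqrt_q of_nat_sum sum_divide_distrib
    by (intro sum.cong refl) simp
  finally show "2/5 \<le> pair_weight 4 pA x y" by simp
qed

lemma A_cert: "cert 4 funA (\<lambda>x y. real (gA x y) / 10) (\<lambda>i x. real (qA x i)) (2/5)"
  unfolding cert_def
proof (intro conjI ballI allI impI)
  fix x y assume x: "x \<in> bitstrings 4" and y: "y \<in> bitstrings 4"
  have c: "gA x y = gA y x \<and> (gA x y \<noteq> 0 \<longrightarrow> funA x \<noteq> funA y)"
    using ball4[OF ball4[OF chk_sym x] y] by simp
  show "real (gA x y) / 10 \<ge> 0" by simp
  show "real (gA x y) / 10 = real (gA y x) / 10" using c by simp
  assume "real (gA x y) / 10 \<noteq> 0"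
  then show "funA x \<noteq> funA y" using c by simp
next
  fix x assume x: "x \<in> bitstrings 4"
  have "(\<Sum>y\<in>bitstrings 4. gA x y) = 10" using ball4[OF chk_row x] by (simp add: sl_L4)
  then have "real (\<Sum>y\<in>bitstrings 4. gA x y) / 10 = 1" by simp
  then show "(\<Sum>y\<in>bitstrings 4. real (gA x y) / 10) = 1" unfolding of_nat_sum sum_divide_distrib .
next
  fix i x assume i: "i < (4::nat)" and x: "x \<in> bitstrings 4"
  have "list_all (\<lambda>i. 0 < qA x i) [0..<4]" using ball4[OF chk_q x] by simp
  then show "real (qA x i) > 0" using ball_upt i by fastforce
  have "(\<Sum>y\<in>bitstrings 4. if x!i \<noteq> y!i then gA x y * qA y i else 0) \<le> 4 * qA x i"
    using ball_upt[OF ball4[OF chk_u x] i] by (simp add: sl_L4)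
  then have "real (\<Sum>y\<in>bitstrings 4. if x!i \<noteq> y!i then gA x y * qA y i else 0) / 10 \<le> real (4 * qA x i) / 10"
    by (simp only: of_nat_le_iff divide_right_mono)
  moreover have "real (\<Sum>y\<in>bitstrings 4. if x!i \<noteq> y!i then gA x y * qA y i else 0) / 10
      = (\<Sum>y\<in>bitstrings 4. if x!i \<noteq> y!i then real (gA x y) / 10 * real (qA y i) else 0)"
    unfolding of_nat_sum sum_divide_distrib by (intro sum.cong refl) simp
  ultimately show "(\<Sum>y\<in>bitstrings 4. if x!i \<noteq> y!i then real (gA x y) / 10 * real (qA y i) else 0) \<le> 2/5 * real (qA x i)"
    by simp
qed

lemma bs1: "bitstrings 1 = {[True], [False]}"
proof
  show "bitstrings 1 \<subseteq> {[True], [False]}"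
  proof
    fix x assume "x \<in> bitstrings 1"
    then obtain a where "x = [a]" by (auto simp: bitstrings_def length_Suc_conv)
    then show "x \<in> {[True], [False]}" by (cases a) auto
  qed
qed (auto simp: bitstrings_def)

lemma bs1': "bitstrings (Suc 0) = {[True], [False]}"
  using bs1 by simp

lemma main_ind:
  "(\<exists>p. p \<in> prob_families (4^d) \<and> (\<forall>x\<in>bitstrings (4^d). \<forall>y\<in>bitstrings (4^d).
      iter 4 d funA x \<noteq> iter 4 d funA y \<longrightarrow> (2/5)^d \<le> pair_weight (4^d) p x y)) \<and>
   (\<exists>G u. cert (4^d) (iter 4 d funA) G u ((2/5)^d))"
proof (induction d)
  case 0
  have P: "(\<lambda>x i. 1::real) \<in> prob_families 1" by (simp add: prob_families_def)
  have W: "\<forall>x\<in>bitstrings 1. \<forall>y\<in>bitstrings 1. hd x \<noteq> hd y \<longrightarrow> 1 \<le> pair_weight 1 (\<lambda>x i. 1) x y"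
    by (auto simp: bs1 bs1' pw_alt)
  have C: "cert 1 hd (\<lambda>x y. if hd x \<noteq> hd y then 1 else 0) (\<lambda>i x. 1) 1"
    unfolding cert_def by (auto simp: bs1 bs1')
  show ?case using P W C by auto
next
  case (Suc d)
  obtain p where p: "p \<in> prob_families (4^d)"
    and pw: "\<forall>x\<in>bitstrings (4^d). \<forall>y\<in>bitstrings (4^d). iter 4 d funA x \<noteq> iter 4 d funA y \<longrightarrow> (2/5)^d \<le> pair_weight (4^d) p x y"
    using Suc.IH by blast
  obtain G u where C: "cert (4^d) (iter 4 d funA) G u ((2/5)^d)" using Suc.IH by blast
  have Npos: "(4::nat)^d > 0" by simp
  have e: "(4::nat)^Suc d = 4 * 4^d" by simp
  have r: "((2::real)/5)^Suc d = 2/5 * (2/5)^d" by simp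
  note U = ub_comp[OF Npos A_prob p A_pw pw]
  note L = lb_comp[OF A_cert C _ Npos]
  show ?case unfolding e r iter_Suc_comp using U L by auto
qed

theorem mainTheorem16:
  fixes d :: nat
  assumes "d \<ge> 1"
  shows "sumPI (4 ^ d) (iter 4 d funA) = ereal ((5 / 2) ^ d)"
proof -
  obtain p where p: "p \<in> prob_families (4^d)"
    and pw: "\<forall>x\<in>bitstrings (4^d). \<forall>y\<in>bitstrings (4^d). iter 4 d funA x \<noteq> iter 4 d funA y \<longrightarrow> (2/5)^d \<le> pair_weight (4^d) p x y"
    using main_ind by blast
  obtain G u where C: "cert (4^d) (iter 4 d funA) G u ((2/5)^d)" using main_ind by blast
  have e: "1 / ((2::real)/5)^d = (5/2)^d" by (simp add: power_divide)
  have "sumPI (4 ^ d) (iter 4 d funA) \<le> ereal ((5/2)^d)"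
    using sumPI_upper[OF p _ pw] e by simp
  moreover have "ereal ((5/2)^d) \<le> sumPI (4 ^ d) (iter 4 d funA)"
    using sumPI_lower[OF C] e by simp
  ultimately show ?thesis by (rule antisym)
qed

end
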